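(* Let $\{c_n\}_{n\in\mathbb{N}^+}$ be a sequence of real numbers with $c_n\to\infty$ as $n\to\infty$. Then there exists a continuous function $f:\mathbb{R}\to\mathbb{R}$ which is Lebesgue integrable on $\mathbb{R}$ and such that for every real $x\neq 0$, $$\limsup_{n\to\infty} c_n\, f(n\,x)=\infty,$$ where $n$ ranges over the positive integers.
   Context: $\mathbb{N}^+=\{1,2,\dots\}$. *)

theory Defs
  imports "HOL-Analysis.Analysis"
begin

end

theory Submission
  imports Defs
begin

lemma summ_inv2: "summable (\<lambda>k. 3 / real (Suc k) ^ 2)"
proof -
  have "summable (\<lambda>k. inverse (real k ^ 2))" by (rule inverse_power_summable) simp
  then have "summable (\<lambda>k. inverse (real (Suc k) ^ 2))" by (subst summable_Suc_iff)
  then have "summable (\<lambda>k. 3 * inverse (real (Suc k) ^ 2))" by (rule summable_mult)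
  then show ?thesis by (simp add: divide_inverse)
qed

lemma aux3: "(K::real) > 0 \<Longrightarrow> 3 * K / K ^ 3 = 3 / K ^ 2"
  by (simp add: power3_eq_cube power2_eq_square)

lemma summ_h: "summable (\<lambda>k. 1 / real (Suc k) ^ 3)"
proof (rule summable_comparison_test[OF _ summ_inv2])
  show "\<exists>N. \<forall>n\<ge>N. norm (1 / real (Suc n) ^ 3) \<le> 3 / real (Suc n) ^ 2"
  proof (intro exI allI impI)
    fix n :: nat
    have "1 / real (Suc n) ^ 3 \<le> 1 / real (Suc n) ^ 2"
      by (rule divide_left_mono) (auto intro!: power_increasing)
    also have "\<dots> \<le> 3 / real (Suc n) ^ 2" by (rule divide_right_mono) auto
    finally show "norm (1 / real (Suc n) ^ 3) \<le> 3 / real (Suc n) ^ 2" by simp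
  qed
qed


locale bumps =
  fixes N :: "nat \<Rightarrow> real"
begin

definition b :: "nat \<Rightarrow> real \<Rightarrow> real" where
  "b k t = max 0 (min 1 (min (t - N k + 1) (N k + real (Suc k) + 1 - t)))"

definition F :: "real \<Rightarrow> real" where
  "F t = (\<Sum>k. 1 / real (Suc k) ^ 3 * b k t)"

lemma b_ge0: "0 \<le> b k t" and b_le1: "b k t \<le> 1"
  by (auto simp: b_def)

lemma b_cont: "continuous_on UNIV (b k)"
  unfolding b_def by (intro continuous_intros)

lemma term_norm: "norm (1 / real (Suc k) ^ 3 * b k t) \<le> 1 / real (Suc k) ^ 3"
  using b_ge0[of k t] b_le1[of k t] by (simp add: abs_mult divide_right_mono)

lemma term_summable: "summable (\<lambda>k. 1 / real (Suc k) ^ 3 * b k t)"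
  by (rule summable_comparison_test[OF _ summ_h]) (use term_norm in blast)

lemma F_ge0: "0 \<le> F t"
  unfolding F_def by (rule suminf_nonneg[OF term_summable]) (simp add: b_ge0)

lemma F_ge_term: "1 / real (Suc k) ^ 3 * b k t \<le> F t"
proof -
  have "sum (\<lambda>k. 1 / real (Suc k) ^ 3 * b k t) {k} \<le> F t"
    unfolding F_def by (rule sum_le_suminf[OF term_summable]) (auto simp: b_ge0)
  then show ?thesis by simp
qed

lemma F_cont: "continuous_on UNIV F"
proof -
  have ul: "uniform_limit UNIV (\<lambda>n t. \<Sum>i<n. 1 / real (Suc i) ^ 3 * b i t) F sequentially"
    unfolding F_def by (rule Weierstrass_m_test[OF term_norm summ_h])
  show ?thesis
  proof (rule uniform_limit_theorem[OF _ ul])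
    show "\<forall>\<^sub>F n in sequentially. continuous_on UNIV (\<lambda>t. \<Sum>i<n. 1 / real (Suc i) ^ 3 * b i t)"
      using b_cont by (intro always_eventually allI continuous_intros) auto
  qed simp
qed

lemma b_meas[measurable]: "b k \<in> borel_measurable borel"
  unfolding b_def by measurable

lemma b_le_ind: "b k t \<le> indicator {N k - 1 .. N k + real (Suc k) + 1} t"
  by (auto simp: b_def indicator_def)

lemma term_integrable: "integrable lborel (\<lambda>t. 1 / real (Suc k) ^ 3 * b k t)"
proof -
  have "integrable lborel (indicator {N k - 1 .. N k + real (Suc k) + 1} :: real \<Rightarrow> real)"
    by (rule integrable_real_indicator) auto
  then have "integrable lborel (b k)"
    by (rule Bochner_Integration.integrable_bound) (use b_le_ind b_ge0 in \<open>auto intro!: AE_I2\<close>)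
  then show ?thesis by simp
qed

lemma term_integral: "(\<integral>t. norm (1 / real (Suc k) ^ 3 * b k t) \<partial>lborel) \<le> 3 / real (Suc k) ^ 2"
proof -
  let ?I = "{N k - 1 .. N k + real (Suc k) + 1}"
  have ii: "integrable lborel (indicator ?I :: real \<Rightarrow> real)"
    by (rule integrable_real_indicator) auto
  have ib: "integrable lborel (b k)"
    using ii by (rule Bochner_Integration.integrable_bound) (use b_le_ind b_ge0 in \<open>auto intro!: AE_I2\<close>)
  have e1: "(\<integral>t. norm (1 / real (Suc k) ^ 3 * b k t) \<partial>lborel) = 1 / real (Suc k) ^ 3 * (\<integral>t. b k t \<partial>lborel)"
    using b_ge0 by (simp add: abs_mult)
  have e2: "(\<integral>t. b k t \<partial>lborel) \<le> (\<integral>t. indicator ?I t \<partial>lborel)"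
    by (rule integral_mono[OF ib ii]) (rule b_le_ind)
  have e3: "(\<integral>t. indicator ?I t \<partial>lborel) = real (Suc k) + 2"
    by simp
  have "(\<integral>t. norm (1 / real (Suc k) ^ 3 * b k t) \<partial>lborel) \<le> 1 / real (Suc k) ^ 3 * (real (Suc k) + 2)"
    unfolding e1 using e2 e3 by (intro mult_left_mono) auto
  also have "\<dots> \<le> 3 / real (Suc k) ^ 2"
  proof -
    have "real (Suc k) + 2 \<le> 3 * real (Suc k)" by simp
    then have "(real (Suc k) + 2) / real (Suc k) ^ 3 \<le> 3 * real (Suc k) / real (Suc k) ^ 3"
      by (rule divide_right_mono) simp
    also have "\<dots> = 3 / real (Suc k) ^ 2" by (rule aux3) simp
    finally show ?thesis by simp
  qed
  finally show ?thesis .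
qed

lemma F_big:
  assumes "N k \<le> t" "t \<le> N k + real (Suc k)"
  shows "1 / real (Suc k) ^ 3 \<le> F t"
proof -
  have "b k t = 1" using assms by (simp add: b_def)
  then show ?thesis using F_ge_term[of k t] by simp
qed

lemma F_integrable: "integrable lborel F"
  unfolding F_def
proof (rule integrable_suminf)
  show "\<And>i. integrable lborel (\<lambda>t. 1 / real (Suc i) ^ 3 * b i t)" by (rule term_integrable)
  show "AE x in lborel. summable (\<lambda>i. norm (1 / real (Suc i) ^ 3 * b i x))"
    using b_ge0 term_summable by (simp add: abs_mult)
  show "summable (\<lambda>i. \<integral>x. norm (1 / real (Suc i) ^ 3 * b i x) \<partial>lborel)"
    by (rule summable_comparison_test[OF _ summ_inv2]) (use term_integral in auto)
qed

end


theorem theorem1: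
  fixes c :: "nat \<Rightarrow> real"
  assumes "filterlim (\<lambda>n. c (Suc n)) at_top sequentially"
  shows "\<exists>f :: real \<Rightarrow> real. continuous_on UNIV f \<and> integrable lborel f \<and>
           (\<forall>x. x \<noteq> 0 \<longrightarrow>
              limsup (\<lambda>n. ereal (c (Suc n) * f (real (Suc n) * x))) = \<infinity>)"
proof -
  have "\<forall>B. \<exists>M. \<forall>n\<ge>M. B \<le> c (Suc n)"
    using assms unfolding filterlim_at_top eventually_sequentially by blast
  then obtain Mf where Mf: "\<And>B n. n \<ge> Mf B \<Longrightarrow> B \<le> c (Suc n)" by metis
  define K where "K k = real (Suc k)" for k
  define N where "N k = K k * (real (Mf (K k ^ 4)) + K k)" for k
  interpret bumps N .
  define f where "f y = F y + F (- y)" for y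
  have cf: "continuous_on UNIV f"
    unfolding f_def using F_cont
    by (intro continuous_intros continuous_on_compose2[OF F_cont]) auto
  have iF2: "integrable lborel (\<lambda>y. F (- y))"
    using lborel_integrable_real_affine_iff[of "-1" F 0] F_integrable by simp
  have intf: "integrable lborel f"
    unfolding f_def using F_integrable iF2 by (rule Bochner_Integration.integrable_add)
  have ls: "limsup (\<lambda>n. ereal (c (Suc n) * f (real (Suc n) * x))) = \<infinity>" if "x \<noteq> 0" for x
  proof -
    define X where "X n = ereal (c (Suc n) * f (real (Suc n) * x))" for n
    have sup: "(SUP m\<in>{n0..}. X m) = top" for n0
    proof (subst SUP_eq_top_iff, intro allI impI)
      fix y :: ereal assume "y < top"
      then have "y \<noteq> \<infinity>" by (auto simp: top_ereal_def)
      then obtain B :: nat where yB: "y < ereal (real B)" using less_PInf_Ex_of_nat by blast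
      define a where "a = \<bar>x\<bar>"
      have a0: "0 < a" using that by (simp add: a_def)
      define k where "k = max n0 (max B (nat \<lceil>a\<rceil>))"
      have Kpos: "0 < K k" by (simp add: K_def)
      have aK: "a \<le> K k"
      proof -
        have k1: "nat \<lceil>a\<rceil> \<le> k" unfolding k_def by (rule order.trans[OF max.cobounded2 max.cobounded2])
        have "a \<le> real (nat \<lceil>a\<rceil>)" by (rule real_nat_ceiling_ge)
        also have "\<dots> \<le> real k" using k1 by (rule of_nat_mono)
        finally show ?thesis by (simp add: K_def)
      qed
      have BK: "real B < K k" unfolding K_def k_def by simp
      have Npos: "0 < N k" unfolding N_def using Kpos by (simp add: add_nonneg_pos)
      define m where "m = nat \<lceil>N k / a\<rceil>"
      have m1: "N k / a \<le> real m" unfolding m_def by linarith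
      have "0 < N k / a" using Npos a0 by simp
      then have "0 \<le> \<lceil>N k / a\<rceil>" by linarith
      then have "real m = of_int \<lceil>N k / a\<rceil>" unfolding m_def by simp
      then have m2: "real m < N k / a + 1" using ceiling_correct[of "N k / a"] by linarith
      have "0 < real m" using m1 \<open>0 < N k / a\<close> by linarith
      then have mpos: "0 < m" by simp
      define n where "n = m - 1"
      have mn: "Suc n = m" using mpos by (simp add: n_def)
      define t where "t = real m * a"
      have t1: "N k \<le> t" using m1 a0 by (simp add: t_def pos_divide_le_eq mult.commute)
      have "t < (N k / a + 1) * a" unfolding t_def using m2 a0 by (rule mult_strict_right_mono)
      also have "\<dots> = N k + a" using a0 by (simp add: field_simps)
      finally have t2: "t \<le> N k + real (Suc k)" using aK by (simp add: K_def)
      have Ft: "1 / K k ^ 3 \<le> F t" using F_big[OF t1 t2] by (simp add: K_def)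
      have ft: "F t \<le> f (real (Suc n) * x)"
      proof (cases "x > 0")
        case True
        then have "real (Suc n) * x = t" by (simp add: mn t_def a_def)
        then show ?thesis by (simp add: f_def F_ge0)
      next
        case False
        then have "- (real (Suc n) * x) = t" by (simp add: mn t_def a_def)
        then show ?thesis by (simp add: f_def F_ge0)
      qed
      have "N k / K k \<le> N k / a" using Npos a0 aK by (intro divide_left_mono) auto
      also have "N k / K k = real (Mf (K k ^ 4)) + K k" using Kpos by (simp add: N_def)
      finally have "real (Mf (K k ^ 4)) + K k \<le> real m" using m1 by linarith
      then have "real (Mf (K k ^ 4)) + real k \<le> real n"
        using mpos by (simp add: K_def n_def of_nat_diff)
      then have nM: "Mf (K k ^ 4) \<le> n" and nk: "k \<le> n" by linarith+
      have cK: "K k ^ 4 \<le> c (Suc n)" by (rule Mf[OF nM])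
      have "K k = K k ^ 4 * (1 / K k ^ 3)" using Kpos by (simp add: power_eq_if)
      also have "\<dots> \<le> c (Suc n) * f (real (Suc n) * x)"
        using cK Ft ft Kpos order.trans[OF zero_le_power[of "K k" 4] cK] by (intro mult_mono) auto
      finally have "real B < c (Suc n) * f (real (Suc n) * x)" using BK by linarith
      then have "ereal (real B) < X n" unfolding X_def by simp
      then have "y < X n" using yB by (meson order.strict_trans)
      moreover have "n \<in> {n0..}" using nk by (simp add: k_def)
      ultimately show "\<exists>i\<in>{n0..}. y < X i" by blast
    qed
    have "limsup X = top" unfolding limsup_INF_SUP sup by simp
    then show ?thesis unfolding X_def top_ereal_def .
  qed
  show ?thesis using cf intf ls by blast
qed

end
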